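(* Every graph of pathwidth at most $p$ is $p^2$-almost equitably $(p+1)$-colorable.
   Context: A $k$-coloring is equitable if its $k$ color classes (stable sets) have sizes pairwise differing by at most one. A graph $G$ is $q$-almost equitably $k$-colorable if there is a set $X$ of at most $q$ vertices such that $G\setminus X$ has an equitable $k$-coloring. *)

theory Defs
  imports Main
begin

definition simple_graph :: "'a set \<Rightarrow> 'a set set \<Rightarrow> bool" where
  "simple_graph V E \<longleftrightarrow> finite V \<and>
     (\<forall>e\<in>E. \<exists>u v. e = {u, v} \<and> u \<noteq> v \<and> u \<in> V \<and> v \<in> V)"

definition path_decomposition :: "'a set \<Rightarrow> 'a set set \<Rightarrow> 'a set list \<Rightarrow> bool" where
  "path_decomposition V E Bs \<longleftrightarrow>
     (\<Union>(set Bs) = V) \<and>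
     (\<forall>e\<in>E. \<exists>B\<in>set Bs. e \<subseteq> B) \<and>
     (\<forall>v i j l. i \<le> j \<and> j \<le> l \<and> l < length Bs \<and> v \<in> Bs ! i \<and> v \<in> Bs ! l
        \<longrightarrow> v \<in> Bs ! j)"

definition pd_width :: "'a set list \<Rightarrow> nat" where
  "pd_width Bs = Max (insert 0 (card ` set Bs)) - 1"

definition pathwidth_at_most :: "'a set \<Rightarrow> 'a set set \<Rightarrow> nat \<Rightarrow> bool" where
  "pathwidth_at_most V E p \<longleftrightarrow> (\<exists>Bs. path_decomposition V E Bs \<and> pd_width Bs \<le> p)"

definition proper_coloring :: "'a set \<Rightarrow> 'a set set \<Rightarrow> nat \<Rightarrow> ('a \<Rightarrow> nat) \<Rightarrow> bool" where
  "proper_coloring V E k c \<longleftrightarrow>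
     (\<forall>v\<in>V. c v < k) \<and> (\<forall>u v. {u, v} \<in> E \<longrightarrow> u \<noteq> v \<longrightarrow> c u \<noteq> c v)"

definition equitable_coloring :: "'a set \<Rightarrow> 'a set set \<Rightarrow> nat \<Rightarrow> ('a \<Rightarrow> nat) \<Rightarrow> bool" where
  "equitable_coloring V E k c \<longleftrightarrow> proper_coloring V E k c \<and>
     (\<forall>i<k. \<forall>j<k. card {v\<in>V. c v = i} \<le> card {v\<in>V. c v = j} + 1)"

definition equitably_colorable :: "'a set \<Rightarrow> 'a set set \<Rightarrow> nat \<Rightarrow> bool" where
  "equitably_colorable V E k \<longleftrightarrow> (\<exists>c. equitable_coloring V E k c)"

definition del_vertices_E :: "'a set set \<Rightarrow> 'a set \<Rightarrow> 'a set set" where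
  "del_vertices_E E X = {e\<in>E. e \<inter> X = {}}"

definition almost_equitably_colorable :: "'a set \<Rightarrow> 'a set set \<Rightarrow> nat \<Rightarrow> nat \<Rightarrow> bool" where
  "almost_equitably_colorable V E q k \<longleftrightarrow>
     (\<exists>X. X \<subseteq> V \<and> card X \<le> q \<and> equitably_colorable (V - X) (del_vertices_E E X) k)"

end

theory Submission
  imports Defs
begin

definition alpha :: "nat \<Rightarrow> nat" where
  "alpha n = (if n \<le> 1 then 0 else 2 * n - 3)"

lemma ivt_nat:
  fixes f :: "nat \<Rightarrow> nat"
  assumes "f 0 \<le> T" "T \<le> f M" "\<And>m. f (Suc m) \<le> Suc (f m)"
  shows "\<exists>m. f m = T"
proof -
  define m0 where "m0 = (LEAST m. T \<le> f m)"
  have h: "T \<le> f m0" unfolding m0_def by (rule LeastI[of _ M]) (use assms in auto)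
  show ?thesis
  proof (cases m0)
    case 0 then show ?thesis using h assms(1) by auto
  next
    case (Suc j)
    have "j < m0" using Suc by simp
    then have "\<not> T \<le> f j" unfolding m0_def by (rule not_less_Least)
    then show ?thesis using h assms(3)[of j] Suc by (intro exI[of _ m0]) auto
  qed
qed

lemma card_by_colors:
  fixes col :: "'a \<Rightarrow> nat"
  assumes "finite W" "\<forall>u\<in>W. col u < n"
  shows "card W = (\<Sum>i<n. card {u\<in>W. col u = i})"
proof -
  have "W = (\<Union>i\<in>{..<n}. {u\<in>W. col u = i})" using assms(2) by auto
  then have "card W = card (\<Union>i\<in>{..<n}. {u\<in>W. col u = i})" by simp
  also have "\<dots> = (\<Sum>i<n. card {u\<in>W. col u = i})"
    using assms(1) by (intro card_UN_disjoint) auto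
  finally show ?thesis .
qed

locale ivl =
  fixes V :: "'a set" and s e key :: "'a \<Rightarrow> nat"
  assumes finV: "finite V"
    and injk: "inj_on key V"
    and mono: "\<And>u v. u \<in> V \<Longrightarrow> v \<in> V \<Longrightarrow> key u < key v \<Longrightarrow> s u \<le> s v"
    and se: "\<And>v. v \<in> V \<Longrightarrow> s v \<le> e v"
begin

definition adj :: "'a \<Rightarrow> 'a \<Rightarrow> bool" where
  "adj u v \<longleftrightarrow> s u \<le> e v \<and> s v \<le> e u"

lemma adj_sym: "adj u v = adj v u"
  unfolding adj_def by auto

definition proper :: "'a set \<Rightarrow> ('a \<Rightarrow> nat) \<Rightarrow> bool" where
  "proper W c \<longleftrightarrow> (\<forall>u\<in>W. \<forall>v\<in>W. u \<noteq> v \<longrightarrow> adj u v \<longrightarrow> c u \<noteq> c v)"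

definition cross :: "'a set \<Rightarrow> nat \<Rightarrow> 'a \<Rightarrow> bool" where
  "cross W m u \<longleftrightarrow> key u < m \<and> (\<exists>w\<in>W. m \<le> key w \<and> adj u w)"

lemma proper_mono: "proper W c \<Longrightarrow> W' \<subseteq> W \<Longrightarrow> proper W' c"
  unfolding proper_def by blast

lemma cross_clique:
  assumes "W \<subseteq> V" "u1 \<in> W" "u2 \<in> W" "cross W m u1" "cross W m u2"
  shows "adj u1 u2"
proof -
  obtain w1 where w1: "w1 \<in> W" "m \<le> key w1" "adj u1 w1" "key u1 < m" using assms(4) cross_def by auto
  obtain w2 where w2: "w2 \<in> W" "m \<le> key w2" "adj u2 w2" "key u2 < m" using assms(5) cross_def by auto
  have "s u1 \<le> s w2" using mono[of u1 w2] assms w1 w2 by auto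
  moreover have "s u2 \<le> s w1" using mono[of u2 w1] assms w1 w2 by auto
  ultimately show ?thesis using w1 w2 unfolding adj_def by auto
qed

lemma cross_unique:
  assumes "W \<subseteq> V" "proper W col" "u1 \<in> W" "u2 \<in> W" "cross W m u1" "cross W m u2"
    "col u1 = col u2"
  shows "u1 = u2"
  using cross_clique[OF assms(1,3,4,5,6)] assms(2,3,4,7) unfolding proper_def by blast

lemma properD: "proper W c \<Longrightarrow> u \<in> W \<Longrightarrow> v \<in> W \<Longrightarrow> u \<noteq> v \<Longrightarrow> adj u v \<Longrightarrow> c u \<noteq> c v"
  unfolding proper_def by blast

lemma cross_two:
  assumes "W \<subseteq> V" "proper W col" "\<forall>u\<in>W. col u < 2" "u1 \<in> W" "u2 \<in> W"
    "cross W m u1" "cross W m u2" "col u1 \<noteq> col u2"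
  shows False
proof -
  obtain w1 where w1: "w1 \<in> W" "m \<le> key w1" "adj u1 w1" "key u1 < m" using assms(6) cross_def by auto
  obtain w2 where w2: "w2 \<in> W" "m \<le> key w2" "adj u2 w2" "key u2 < m" using assms(7) cross_def by auto
  have c: "col w1 < 2" "col w2 < 2" "col u1 < 2" "col u2 < 2" using assms(3,4,5) w1 w2 by auto
  have ne: "w1 \<noteq> u1" "w1 \<noteq> u2" "w2 \<noteq> u1" "w2 \<noteq> u2" using w1 w2 by auto
  show False
  proof (cases "s w1 \<le> s w2")
    case True
    have "s u2 \<le> s w1" using mono[of u2 w1] assms(1,5) w1 w2 by auto
    moreover have "s w1 \<le> e w1" using se assms(1) w1 by auto
    ultimately have "adj u2 w1" using True w2 unfolding adj_def by auto
    then have "col u2 \<noteq> col w1" using properD[OF assms(2) assms(5) w1(1)] ne by auto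
    moreover have "col u1 \<noteq> col w1" using properD[OF assms(2) assms(4) w1(1)] ne w1 by auto
    ultimately show False using assms(8) c by linarith
  next
    case False
    have "s u1 \<le> s w2" using mono[of u1 w2] assms(1,4) w1 w2 by auto
    moreover have "s w2 \<le> e w2" using se assms(1) w2 by auto
    ultimately have "adj u1 w2" using False w1 unfolding adj_def by auto
    then have "col u1 \<noteq> col w2" using properD[OF assms(2) assms(4) w2(1)] ne by auto
    moreover have "col u2 \<noteq> col w2" using properD[OF assms(2) assms(5) w2(1)] ne w2 by auto
    ultimately show False using assms(8) c by linarith
  qed
qed

end

lemma trim:
  fixes col :: "'a \<Rightarrow> nat"
  assumes "finite W" "\<forall>u\<in>W. col u < n" "\<forall>i<n. Suc q \<le> card {u\<in>W. col u = i}"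
  shows "\<exists>X \<subseteq> W. card X = card W - n * Suc q \<and> (\<forall>i<n. card {u\<in>W-X. col u = i} = Suc q)"
proof -
  have "\<forall>i\<in>{..<n}. \<exists>S. S \<subseteq> {u\<in>W. col u = i} \<and> card S = Suc q"
  proof
    fix i assume "i \<in> {..<n}"
    then have "Suc q \<le> card {u\<in>W. col u = i}" using assms(3) by auto
    then obtain S where "S \<subseteq> {u\<in>W. col u = i}" "card S = Suc q" by (rule obtain_subset_with_card_n)
    then show "\<exists>S. S \<subseteq> {u\<in>W. col u = i} \<and> card S = Suc q" by blast
  qed
  then obtain S where S: "\<forall>i\<in>{..<n}. S i \<subseteq> {u\<in>W. col u = i} \<and> card (S i) = Suc q"
    by (rule bchoice[THEN exE]) blast
  define K where "K = (\<Union>i\<in>{..<n}. S i)"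
  have KW: "K \<subseteq> W" using S unfolding K_def by auto
  have finS: "\<forall>i\<in>{..<n}. finite (S i)" proof
    fix i assume "i \<in> {..<n}"
    then have "S i \<subseteq> W" using S by auto
    then show "finite (S i)" using assms(1) finite_subset by auto
  qed
  have "card K = (\<Sum>i<n. card (S i))" unfolding K_def
  proof (rule card_UN_disjoint)
    show "\<forall>i\<in>{..<n}. \<forall>j\<in>{..<n}. i \<noteq> j \<longrightarrow> S i \<inter> S j = {}" using S by blast
  qed (use finS in auto)
  also have "\<dots> = n * Suc q" using S by simp
  finally have cK: "card K = n * Suc q" .
  define X where "X = W - K"
  have "finite K" using KW assms(1) finite_subset by auto
  then have "card X = card W - n * Suc q" unfolding X_def using KW cK card_Diff_subset by metis
  moreover have "\<forall>i<n. card {u\<in>W-X. col u = i} = Suc q"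
  proof (intro allI impI)
    fix i assume i: "i < n"
    have "{u\<in>W-X. col u = i} = S i"
    proof
      show "{u\<in>W-X. col u = i} \<subseteq> S i"
      proof
        fix u assume u: "u \<in> {u\<in>W-X. col u = i}"
        then have "u \<in> K" unfolding X_def by auto
        then obtain j where j: "j < n" "u \<in> S j" unfolding K_def by auto
        then have "col u = j" using S by auto
        then show "u \<in> S i" using u j by auto
      qed
    next
      show "S i \<subseteq> {u\<in>W-X. col u = i}" using S i KW unfolding X_def K_def by auto
    qed
    then show "card {u\<in>W-X. col u = i} = Suc q" using S i by auto
  qed
  moreover have "X \<subseteq> W" unfolding X_def by auto
  ultimately show ?thesis by blast
qed

context ivl
begin

lemma greedy:
  assumes "\<forall>i. card {v\<in>V. s v \<le> i \<and> i \<le> e v} \<le> k"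
  shows "\<exists>col. (\<forall>u\<in>V. col u < k) \<and> proper V col"
proof -
  have "W \<subseteq> V \<longrightarrow> (\<exists>col. (\<forall>u\<in>W. col u < k) \<and> proper W col)" if "finite W" for W
  using that
  proof (induction W rule: finite_ranking_induct[where f = key])
    case empty
    then show ?case unfolding proper_def by auto
  next
    case (insert x S)
    show ?case
    proof
      assume sub: "insert x S \<subseteq> V"
      show "\<exists>col. (\<forall>u\<in>insert x S. col u < k) \<and> proper (insert x S) col"
      proof (cases "x \<in> S")
        case True
        then show ?thesis using insert sub by (simp add: insert_absorb)
      next
        case False
        obtain col where col: "\<forall>u\<in>S. col u < k" "proper S col" using insert sub by auto
        define Nb where "Nb = {u\<in>S. adj u x}"
        have "insert x Nb \<subseteq> {v\<in>V. s v \<le> s x \<and> s x \<le> e v}"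
        proof
          fix u assume u: "u \<in> insert x Nb"
          show "u \<in> {v\<in>V. s v \<le> s x \<and> s x \<le> e v}"
          proof (cases "u = x")
            case True then show ?thesis using sub se by auto
          next
            case ne: False
            then have uS: "u \<in> S" "adj u x" using u Nb_def by auto
            have "key u \<le> key x" using insert(2) uS by auto
            moreover have "key u \<noteq> key x" using injk sub uS ne unfolding inj_on_def by blast
            ultimately have "s u \<le> s x" using mono[of u x] sub uS by auto
            then show ?thesis using uS sub unfolding adj_def by auto
          qed
        qed
        moreover have "finite {v\<in>V. s v \<le> s x \<and> s x \<le> e v}" using finV by auto
        ultimately have "card (insert x Nb) \<le> card {v\<in>V. s v \<le> s x \<and> s x \<le> e v}"
          using card_mono by blast
        then have "card (insert x Nb) \<le> k"
          using assms[rule_format, of "s x"] by linarith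
        moreover have "finite Nb" using insert(1) Nb_def by auto
        moreover have "x \<notin> Nb" using False Nb_def by auto
        ultimately have cN: "card Nb < k" by auto
        have "card (col ` Nb) < k" using cN card_image_le[OF \<open>finite Nb\<close>, of col] by linarith
        then have "\<not> {..<k} \<subseteq> col ` Nb"
          by (metis card_lessThan card_mono \<open>finite Nb\<close> finite_imageI not_le)
        then obtain c where c: "c < k" "c \<notin> col ` Nb" by auto
        define col' where "col' = col(x := c)"
        have "\<forall>u\<in>insert x S. col' u < k" using col c unfolding col'_def by auto
        moreover have "proper (insert x S) col'"
          unfolding proper_def
        proof (intro ballI impI)
          fix u v assume uv: "u \<in> insert x S" "v \<in> insert x S" "u \<noteq> v" "adj u v"
          show "col' u \<noteq> col' v"
          proof (cases "u = x")
            case True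
            then have "v \<in> Nb" using uv Nb_def adj_sym by auto
            then show ?thesis using True uv c unfolding col'_def by auto
          next
            case ux: False
            show ?thesis
            proof (cases "v = x")
              case True
              then have "u \<in> Nb" using uv ux Nb_def by auto
              then show ?thesis using True uv c unfolding col'_def by auto
            next
              case False
              then show ?thesis using ux uv col(2) properD unfolding col'_def by auto
            qed
          qed
        qed
        ultimately show ?thesis by blast
      qed
    qed
  qed
  then show ?thesis using finV by blast
qed

lemma apart_step:
  assumes "W \<subseteq> V" "proper W col"
  shows "card {u\<in>W. col u = a \<and> key u < Suc m \<and> \<not> cross W (Suc m) u}
    \<le> Suc (card {u\<in>W. col u = a \<and> key u < m \<and> \<not> cross W m u})"
proof -
  define S1 where "S1 = {u\<in>W. col u = a \<and> key u < Suc m \<and> \<not> cross W (Suc m) u}"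
  define S0 where "S0 = {u\<in>W. col u = a \<and> key u < m \<and> \<not> cross W m u}"
  define R where "R = {u\<in>W. col u = a \<and> (key u = m \<or> (key u < m \<and> cross W m u \<and> \<not> cross W (Suc m) u))}"
  have fW: "finite W" using assms(1) finV finite_subset by auto
  have "S1 \<subseteq> S0 \<union> R" unfolding S1_def S0_def R_def by auto
  have cR: "card R \<le> Suc 0"
  proof -
    have "\<forall>x\<in>R. \<forall>y\<in>R. x = y"
    proof (intro ballI)
      fix x y assume x: "x \<in> R" and y: "y \<in> R"
      have mix: "z1 = z2" if z1: "z1 \<in> R" "key z1 = m" and z2: "z2 \<in> R" "key z2 < m" for z1 z2
      proof -
        have c2: "cross W m z2" "\<not> cross W (Suc m) z2" using z2 R_def by auto
        then obtain w where w: "w \<in> W" "m \<le> key w" "adj z2 w" unfolding cross_def by auto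
        have "\<not> Suc m \<le> key w" using c2 w z2 unfolding cross_def by auto
        then have "key w = key z1" using w z1 by auto
        then have "w = z1" using injk assms(1) w z1 R_def unfolding inj_on_def by auto
        moreover have "z2 \<noteq> z1" using z1 z2 by auto
        ultimately have "col z2 \<noteq> col z1" using properD[OF assms(2)] w z1 z2 R_def by auto
        then show ?thesis using z1 z2 R_def by auto
      qed
      show "x = y"
      proof (cases "key x = m")
        case True
        show ?thesis
        proof (cases "key y = m")
          case True
          then show ?thesis using \<open>key x = m\<close> injk assms(1) x y R_def unfolding inj_on_def by auto
        next
          case False
          then have "key y < m" using y R_def by auto
          then show ?thesis using mix[OF x True y] by auto
        qed
      next
        case False
        then have kx: "key x < m" using x R_def by auto
        show ?thesis
        proof (cases "key y = m")
          case True
          then show ?thesis using mix[OF y True x kx] by auto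
        next
          case False
          then show ?thesis using cross_unique[OF assms(1,2)] x y R_def kx by auto
        qed
      qed
    qed
    moreover have "finite R" using fW R_def by auto
    ultimately show ?thesis using card_le_Suc0_iff_eq by blast
  qed
  have "card S1 \<le> card (S0 \<union> R)" using \<open>S1 \<subseteq> S0 \<union> R\<close> fW S0_def R_def by (intro card_mono) auto
  also have "\<dots> \<le> card S0 + card R" by (rule card_Un_le)
  finally show ?thesis using cR unfolding S1_def S0_def by auto
qed

end

context ivl
begin

lemma main:
  assumes "W \<subseteq> V" "\<forall>u\<in>W. col u < Suc t" "proper W col" "Suc t * q + alpha (Suc t) \<le> card W"
  shows "\<exists>X c. X \<subseteq> W \<and> card X \<le> max (alpha (Suc t)) (card W - Suc t * Suc q)
     \<and> (\<forall>u\<in>W-X. c u < Suc t) \<and> proper (W-X) c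
     \<and> (\<forall>i<Suc t. card {u\<in>W-X. c u = i} = q \<or> card {u\<in>W-X. c u = i} = Suc q)"
  using assms
proof (induction t arbitrary: W col)
  case 0
  have fW: "finite W" using 0(1) finV finite_subset by auto
  have cls: "{u\<in>W. col u = 0} = W" using 0(2) by auto
  show ?case
  proof (cases "Suc q \<le> card W")
    case True
    then have "\<forall>i<Suc 0. Suc q \<le> card {u\<in>W. col u = i}" using cls by auto
    then have "\<exists>X\<subseteq>W. card X = card W - Suc 0 * Suc q \<and> (\<forall>i<Suc 0. card {u\<in>W-X. col u = i} = Suc q)"
      by (rule trim[OF fW 0(2)])
    then obtain X where X: "X \<subseteq> W" "card X = card W - Suc 0 * Suc q"
      "\<forall>i<Suc 0. card {u\<in>W-X. col u = i} = Suc q"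
      by blast
    have p: "proper (W - X) col" using proper_mono[OF 0(3)] by auto
    have c1: "card X \<le> max (alpha (Suc 0)) (card W - Suc 0 * Suc q)" using X(2) by simp
    have c2: "\<forall>i<Suc 0. card {u\<in>W-X. col u = i} = q \<or> card {u\<in>W-X. col u = i} = Suc q"
      using X(3) by blast
    have c3: "\<forall>u\<in>W-X. col u < Suc 0" using 0(2) by blast
    show ?thesis
      apply (rule exI[of _ X], rule exI[of _ col])
      using X(1) c1 c2 c3 p by blast
  next
    case False
    then have cW: "card W = q" using 0(4) by (simp add: alpha_def)
    have c2: "\<forall>i<Suc 0. card {u\<in>W-{}. col u = i} = q \<or> card {u\<in>W-{}. col u = i} = Suc q"
    proof (intro allI impI)
      fix i :: nat assume "i < Suc 0"
      then have "i = 0" by simp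
      then show "card {u\<in>W-{}. col u = i} = q \<or> card {u\<in>W-{}. col u = i} = Suc q"
        using cls cW by simp
    qed
    have c1: "card ({}::'a set) \<le> max (alpha (Suc 0)) (card W - Suc 0 * Suc q)" by simp
    have c3: "\<forall>u\<in>W-{}. col u < Suc 0" using 0(2) by blast
    have p: "proper (W - {}) col" using 0(3) by simp
    show ?thesis
      apply (rule exI[of _ "{}"], rule exI[of _ col])
      using c1 c2 c3 p by blast
  qed
next
  case (Suc t)
  have fW: "finite W" using Suc(2) finV finite_subset by auto
  have Nsum: "card W = (\<Sum>i<Suc (Suc t). card {u\<in>W. col u = i})"
    using card_by_colors[OF fW Suc(3)] .
  have al1: "1 \<le> alpha (Suc (Suc t))" by (simp add: alpha_def)
  show ?case
  proof (cases "\<exists>b<Suc (Suc t). card {u\<in>W. col u = b} \<le> q")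
    case False
    then have "\<forall>i<Suc (Suc t). Suc q \<le> card {u\<in>W. col u = i}" by auto
    then have "\<exists>X\<subseteq>W. card X = card W - Suc (Suc t) * Suc q \<and> (\<forall>i<Suc (Suc t). card {u\<in>W-X. col u = i} = Suc q)"
      by (rule trim[OF fW Suc(3)])
    then obtain X where X: "X \<subseteq> W" "card X = card W - Suc (Suc t) * Suc q"
      "\<forall>i<Suc (Suc t). card {u\<in>W-X. col u = i} = Suc q"
      by blast
    have "proper (W - X) col" using proper_mono[OF Suc(4)] by auto
    then show ?thesis using X Suc(3)
      by (intro exI[of _ X] exI[of _ col]) auto
  next
    case True
    then obtain b where b: "b < Suc (Suc t)" "card {u\<in>W. col u = b} \<le> q" by auto
    have "\<exists>a<Suc (Suc t). Suc q \<le> card {u\<in>W. col u = a}"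
    proof (rule ccontr)
      assume "\<not> ?thesis"
      then have "\<forall>i\<in>{..<Suc (Suc t)}. card {u\<in>W. col u = i} \<le> q" by auto
      then have "(\<Sum>i<Suc (Suc t). card {u\<in>W. col u = i}) \<le> of_nat (card {..<Suc (Suc t)}) * q"
        by (intro sum_bounded_above) auto
      then have "card W \<le> Suc (Suc t) * q" using Nsum by simp
      then show False using Suc(5) al1 by linarith
    qed
    then obtain a where a: "a < Suc (Suc t)" "Suc q \<le> card {u\<in>W. col u = a}" by auto
    have ab: "a \<noteq> b" using a b by auto
    define T where "T = (if Suc (Suc t) * q + alpha (Suc (Suc t)) + 1 \<le> card W then Suc q else q)"
    define F where "F m = card {u\<in>W. col u = a \<and> key u < m \<and> \<not> cross W m u}
       + card {u\<in>W. col u = b \<and> m \<le> key u}" for m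
    obtain M where M: "\<forall>u\<in>W. key u < M"
      using finite_nat_set_iff_bounded[of "key ` W"] fW by auto
    have F0: "F 0 = card {u\<in>W. col u = b}" unfolding F_def by simp
    have "{u\<in>W. col u = a \<and> key u < M \<and> \<not> cross W M u} = {u\<in>W. col u = a}"
      using M unfolding cross_def by fastforce
    moreover have "{u\<in>W. col u = b \<and> M \<le> key u} = {}" using M by fastforce
    ultimately have FM: "F M = card {u\<in>W. col u = a}" unfolding F_def by (simp only: card.empty add_0_right)
    have Fstep: "F (Suc m) \<le> Suc (F m)" for m
    proof -
      have "card {u\<in>W. col u = b \<and> Suc m \<le> key u} \<le> card {u\<in>W. col u = b \<and> m \<le> key u}"
        using fW by (intro card_mono) auto
      then show ?thesis using apart_step[OF Suc(2,4), of a m] unfolding F_def by linarith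
    qed
    have "F 0 \<le> T" "T \<le> F M" using F0 FM b a unfolding T_def by auto
    then obtain m where Fm: "F m = T" using ivt_nat[of F T M] Fstep by blast
    define A0 where "A0 = {u\<in>W. col u = a \<and> key u < m \<and> \<not> cross W m u}"
    define B0 where "B0 = {u\<in>W. col u = b \<and> m \<le> key u}"
    define Z where "Z = A0 \<union> B0"
    define D where "D = {u\<in>W. (col u = a \<or> col u = b) \<and> cross W m u}"
    define W' where "W' = W - Z - D"
    define g where "g u = (if key u < m \<and> col u = b then a else col u)" for u
    define col' where "col' u = (if g u = Suc t then b else g u)" for u
    have cZ: "card Z = T"
    proof -
      have "A0 \<inter> B0 = {}" using ab unfolding A0_def B0_def by auto
      moreover have "finite A0" "finite B0" using fW unfolding A0_def B0_def by auto
      ultimately have "card Z = card A0 + card B0" unfolding Z_def by (simp add: card_Un_disjoint)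
      then show ?thesis using Fm unfolding F_def A0_def B0_def by simp
    qed
    have ZW: "Z \<subseteq> W" unfolding Z_def A0_def B0_def by auto
    have ZD: "Z \<inter> D = {}" unfolding Z_def A0_def B0_def D_def cross_def by auto
    have DW: "D \<subseteq> W" unfolding D_def by auto
    have fD: "finite D" using fW DW finite_subset by auto
    have fZ: "finite Z" using fW ZW finite_subset by auto
    have cD: "card D + alpha (Suc t) \<le> alpha (Suc (Suc t))"
    proof (cases "t = 0")
      case True
      have "\<forall>x\<in>D. \<forall>y\<in>D. x = y"
      proof (intro ballI)
        fix x y assume x: "x \<in> D" and y: "y \<in> D"
        show "x = y"
        proof (cases "col x = col y")
          case True
          then show ?thesis using cross_unique[OF Suc(2,4)] x y unfolding D_def by auto
        next
          case False
          have "\<forall>u\<in>W. col u < 2" using Suc(3) True by auto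
          then show ?thesis using cross_two[OF Suc(2,4)] x y False unfolding D_def by blast
        qed
      qed
      then have "card D \<le> Suc 0" using card_le_Suc0_iff_eq[OF fD] by blast
      then show ?thesis using True by (simp add: alpha_def)
    next
      case False
      define Da where "Da = {u\<in>W. col u = a \<and> cross W m u}"
      define Db where "Db = {u\<in>W. col u = b \<and> cross W m u}"
      have "card Da \<le> Suc 0"
        using card_le_Suc0_iff_eq[of Da] fW cross_unique[OF Suc(2,4)] unfolding Da_def by auto
      moreover have "card Db \<le> Suc 0"
        using card_le_Suc0_iff_eq[of Db] fW cross_unique[OF Suc(2,4)] unfolding Db_def by auto
      moreover have "D = Da \<union> Db" unfolding D_def Da_def Db_def by auto
      moreover have "card (Da \<union> Db) \<le> card Da + card Db" by (rule card_Un_le)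
      ultimately have "card D \<le> 2" by simp
      then show ?thesis using False by (simp add: alpha_def)
    qed
    have cW': "card W' = card W - T - card D"
    proof -
      have "card (Z \<union> D) = T + card D" using ZD fZ fD cZ by (simp add: card_Un_disjoint)
      moreover have "W' = W - (Z \<union> D)" unfolding W'_def by auto
      moreover have "Z \<union> D \<subseteq> W" using ZW DW by auto
      ultimately show ?thesis using card_Diff_subset[of "Z \<union> D" W] fZ fD by simp
    qed
    have W'V: "W' \<subseteq> V" using Suc(2) unfolding W'_def by auto
    have W'props: "col u \<noteq> a \<and> col u \<noteq> b" if "u \<in> W'" "cross W m u" for u
      using that unfolding W'_def D_def Z_def A0_def by auto
    have W'a: "col u \<noteq> a" if "u \<in> W'" "key u < m" for u
      using that unfolding W'_def D_def Z_def A0_def by auto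
    have W'b: "col u \<noteq> b" if "u \<in> W'" "m \<le> key u" for u
      using that unfolding W'_def Z_def B0_def by auto
    have gb: "g u \<noteq> b \<and> g u < Suc (Suc t)" if "u \<in> W'" for u
      using that W'b[of u] ab a Suc(3) unfolding g_def W'_def by (auto simp: not_less)
    have col'r: "\<forall>u\<in>W'. col' u < Suc t"
    proof
      fix u assume "u \<in> W'"
      then show "col' u < Suc t" using gb[of u] b unfolding col'_def by auto
    qed
    have gne: "g u \<noteq> g v" if uv: "u \<in> W'" "v \<in> W'" "u \<noteq> v" "adj u v" for u v
    proof -
      have cuv: "col u \<noteq> col v" using properD[OF Suc(4)] uv unfolding W'_def by auto
      have vu: "adj v u" using uv adj_sym by auto
      show ?thesis
      proof (cases "key u < m")
        case ku: True
        show ?thesis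
        proof (cases "key v < m")
          case True
          then show ?thesis using ku W'a[OF uv(1) ku] W'a[OF uv(2) True] cuv unfolding g_def by auto
        next
          case False
          then have "m \<le> key v" by simp
          then have "cross W m u" using ku uv unfolding cross_def W'_def by blast
          then show ?thesis using W'props[OF uv(1)] False cuv unfolding g_def by auto
        qed
      next
        case ku: False
        show ?thesis
        proof (cases "key v < m")
          case True
          moreover have "m \<le> key u" using ku by simp
          ultimately have "cross W m v" using uv vu unfolding cross_def W'_def by blast
          then show ?thesis using W'props[OF uv(2)] ku cuv unfolding g_def by auto
        next
          case False
          then show ?thesis using ku cuv unfolding g_def by auto
        qed
      qed
    qed
    have propW': "proper W' col'"
      unfolding proper_def
    proof (intro ballI impI)
      fix u v assume uv: "u \<in> W'" "v \<in> W'" "u \<noteq> v" "adj u v"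
      show "col' u \<noteq> col' v" using gne[OF uv] gb[OF uv(1)] gb[OF uv(2)] unfolding col'_def by auto
    qed
    have e1: "Suc (Suc t) * q = Suc t * q + q" by simp
    have e2: "Suc t * Suc q = Suc t * q + Suc t" by simp
    have e3: "Suc (Suc t) * Suc q = Suc t * q + q + Suc (Suc t)" by simp
    have TT: "T = q \<or> T = Suc q" unfolding T_def by auto
    have pre: "Suc t * q + alpha (Suc t) \<le> card W'"
      using Suc(5) cW' cD TT unfolding e1 T_def by (cases "Suc (Suc t) * q + alpha (Suc (Suc t)) + 1 \<le> card W") (auto simp: e1)
    obtain X' c' where IH: "X' \<subseteq> W'" "card X' \<le> max (alpha (Suc t)) (card W' - Suc t * Suc q)"
      "\<forall>u\<in>W'-X'. c' u < Suc t" "proper (W'-X') c'"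
      "\<forall>i<Suc t. card {u\<in>W'-X'. c' u = i} = q \<or> card {u\<in>W'-X'. c' u = i} = Suc q"
      using Suc.IH[OF W'V col'r propW' pre] by blast
    define X where "X = D \<union> X'"
    define c where "c u = (if u \<in> Z then Suc t else c' u)" for u
    have XW: "X \<subseteq> W" using IH(1) DW unfolding X_def W'_def by auto
    have WX: "W - X = Z \<union> (W' - X')" using IH(1) ZW ZD unfolding X_def W'_def by auto
    have cX: "card X \<le> card D + card X'" unfolding X_def by (rule card_Un_le)
    have bound: "card X \<le> max (alpha (Suc (Suc t))) (card W - Suc (Suc t) * Suc q)"
    proof (cases "Suc (Suc t) * q + alpha (Suc (Suc t)) + 1 \<le> card W")
      case True
      then have "T = Suc q" unfolding T_def by auto
      then show ?thesis using cX IH(2) cW' cD True unfolding e1 e2 e3 by linarith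
    next
      case False
      then have "T = q" unfolding T_def by auto
      then show ?thesis using cX IH(2) cW' cD False unfolding e1 e2 e3 by linarith
    qed
    have colr: "\<forall>u\<in>W-X. c u < Suc (Suc t)"
    proof
      fix u assume "u \<in> W - X"
      then show "c u < Suc (Suc t)" using IH(3) unfolding WX c_def
        by (cases "u \<in> Z") (auto simp: less_Suc_eq)
    qed
    have Zind: "\<not> adj u v" if "u \<in> Z" "v \<in> Z" "u \<noteq> v" for u v
    proof
      assume adj: "adj u v"
      have vu: "adj v u" using adj adj_sym by auto
      show False
      proof (cases "u \<in> A0")
        case uA: True
        show False
        proof (cases "v \<in> A0")
          case True
          then show False using properD[OF Suc(4), of u v] uA adj that unfolding A0_def by auto
        next
          case False
          then have "v \<in> B0" using that Z_def by auto
          then have "cross W m u" using uA adj unfolding cross_def A0_def B0_def by auto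
          then show False using uA unfolding A0_def by auto
        qed
      next
        case uA: False
        then have uB: "u \<in> B0" using that Z_def by auto
        show False
        proof (cases "v \<in> A0")
          case True
          then have "cross W m v" using uB vu unfolding cross_def A0_def B0_def by auto
          then show False using True unfolding A0_def by auto
        next
          case False
          then have "v \<in> B0" using that Z_def by auto
          then show False using properD[OF Suc(4), of u v] uB adj that unfolding B0_def by auto
        qed
      qed
    qed
    have propX: "proper (W - X) c"
      unfolding proper_def
    proof (intro ballI impI)
      fix u v assume uv: "u \<in> W - X" "v \<in> W - X" "u \<noteq> v" "adj u v"
      show "c u \<noteq> c v"
      proof (cases "u \<in> Z")
        case True
        show ?thesis
        proof (cases "v \<in> Z")
          case True
          then show ?thesis using Zind[of u v] \<open>u \<in> Z\<close> uv by auto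
        next
          case False
          then have "v \<in> W' - X'" using uv WX by auto
          then show ?thesis using IH(3) False True unfolding c_def by fastforce
        qed
      next
        case uZ: False
        then have u': "u \<in> W' - X'" using uv WX by auto
        show ?thesis
        proof (cases "v \<in> Z")
          case True
          moreover have "c' u < Suc t" using IH(3) u' by blast
          ultimately show ?thesis using uZ unfolding c_def by simp
        next
          case False
          then have "v \<in> W' - X'" using uv WX by auto
          then show ?thesis using properD[OF IH(4) u'] uv False uZ unfolding c_def by auto
        qed
      qed
    qed
    have classes: "\<forall>i<Suc (Suc t). card {u\<in>W-X. c u = i} = q \<or> card {u\<in>W-X. c u = i} = Suc q"
    proof (intro allI impI)
      fix i assume i: "i < Suc (Suc t)"
      show "card {u\<in>W-X. c u = i} = q \<or> card {u\<in>W-X. c u = i} = Suc q"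
      proof (cases "i = Suc t")
        case True
        have "{u\<in>W-X. c u = i} = Z"
        proof
          show "{u\<in>W-X. c u = i} \<subseteq> Z"
          proof
            fix u assume u: "u \<in> {u\<in>W-X. c u = i}"
            show "u \<in> Z"
            proof (rule ccontr)
              assume uZ: "u \<notin> Z"
              then have "u \<in> W' - X'" using u WX by auto
              then have "c' u < Suc t" using IH(3) by blast
              then show False using u uZ True unfolding c_def by simp
            qed
          qed
        next
          show "Z \<subseteq> {u\<in>W-X. c u = i}" using True unfolding WX c_def by auto
        qed
        then show ?thesis using cZ TT by auto
      next
        case False
        then have i': "i < Suc t" using i by auto
        have "W' \<inter> Z = {}" unfolding W'_def by auto
        then have "{u\<in>W-X. c u = i} = {u\<in>W'-X'. c' u = i}" using i' unfolding WX c_def by auto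
        then show ?thesis using IH(5) i' by auto
      qed
    qed
    show ?thesis using XW bound colr propX classes by blast
  qed
qed

end

lemma alpha_le: "alpha (Suc p) \<le> p ^ 2"
  by (cases p) (auto simp: alpha_def power2_eq_square)

theorem corollary1:
  fixes V :: "'a set" and E :: "'a set set" and p :: nat
  assumes "simple_graph V E" and "pathwidth_at_most V E p"
  shows "almost_equitably_colorable V E (p ^ 2) (p + 1)"
proof -
  have finV: "finite V" using assms(1) unfolding simple_graph_def by auto
  have edges: "\<And>x. x \<in> E \<Longrightarrow> \<exists>u v. x = {u, v} \<and> u \<noteq> v \<and> u \<in> V \<and> v \<in> V"
    using assms(1) unfolding simple_graph_def by auto
  obtain Bs where pd: "path_decomposition V E Bs" and w: "pd_width Bs \<le> p"
    using assms(2) unfolding pathwidth_at_most_def by auto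
  have cov: "\<Union>(set Bs) = V" and ecov: "\<forall>x\<in>E. \<exists>B\<in>set Bs. x \<subseteq> B"
    and cons: "\<And>v i j l. i \<le> j \<Longrightarrow> j \<le> l \<Longrightarrow> l < length Bs \<Longrightarrow> v \<in> Bs ! i \<Longrightarrow> v \<in> Bs ! l \<Longrightarrow> v \<in> Bs ! j"
    using pd unfolding path_decomposition_def by blast+
  define I where "I v = {i. i < length Bs \<and> v \<in> Bs ! i}" for v
  define s where "s v = Min (I v)" for v
  define e where "e v = Max (I v)" for v
  have Ifin: "finite (I v)" for v unfolding I_def by auto
  have Ine: "I v \<noteq> {}" if "v \<in> V" for v
  proof -
    have "v \<in> \<Union>(set Bs)" using that cov by simp
    then obtain B where "B \<in> set Bs" "v \<in> B" by blast
    then obtain i where "i < length Bs" "Bs ! i = B" by (auto simp: in_set_conv_nth)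
    then show ?thesis using \<open>v \<in> B\<close> unfolding I_def by auto
  qed
  have sI: "s v \<in> I v" and eI: "e v \<in> I v" if "v \<in> V" for v
    using Min_in[OF Ifin Ine[OF that]] Max_in[OF Ifin Ine[OF that]] unfolding s_def e_def by auto
  have memb: "v \<in> Bs ! j \<longleftrightarrow> s v \<le> j \<and> j \<le> e v" if "v \<in> V" "j < length Bs" for v j
  proof
    assume "v \<in> Bs ! j"
    then have "j \<in> I v" using that unfolding I_def by auto
    then show "s v \<le> j \<and> j \<le> e v" unfolding s_def e_def using Ifin by auto
  next
    assume a: "s v \<le> j \<and> j \<le> e v"
    have "e v < length Bs" "v \<in> Bs ! s v" "v \<in> Bs ! e v" using sI[OF that(1)] eI[OF that(1)] unfolding I_def by auto
    then show "v \<in> Bs ! j" using cons[of "s v" j "e v" v] a by auto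
  qed
  have se: "s v \<le> e v" if "v \<in> V" for v
    using sI[OF that] Ifin unfolding e_def by auto
  have elen: "e v < length Bs" if "v \<in> V" for v
    using eI[OF that] unfolding I_def by auto
  obtain f :: "'a \<Rightarrow> nat" and n :: nat where f: "f ` V = {i. i < n}" "inj_on f V" using finite_imp_inj_to_nat_seg[OF finV] by blast
  have fn: "f v < n" if "v \<in> V" for v using f(1) that by auto
  define key where "key v = s v * n + f v" for v
  have injk: "inj_on key V"
  proof (rule inj_onI)
    fix u v assume uv: "u \<in> V" "v \<in> V" "key u = key v"
    have "key u mod n = f u" using fn[OF uv(1)] unfolding key_def by simp
    moreover have "key v mod n = f v" using fn[OF uv(2)] unfolding key_def by simp
    ultimately have "f u = f v" using uv by simp
    then show "u = v" using f(2) uv unfolding inj_on_def by blast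
  qed
  have mono: "s u \<le> s v" if "u \<in> V" "v \<in> V" "key u < key v" for u v
  proof (rule ccontr)
    assume "\<not> s u \<le> s v"
    then have "Suc (s v) \<le> s u" by simp
    then have "Suc (s v) * n \<le> s u * n" by (rule mult_le_mono1)
    moreover have "key v < Suc (s v) * n" using fn[OF that(2)] unfolding key_def by simp
    moreover have "s u * n \<le> key u" unfolding key_def by simp
    ultimately show False using that(3) by linarith
  qed
  interpret ivl V s e key
    by unfold_locales (use finV injk mono se in auto)
  have bnd: "\<forall>i. card {v\<in>V. s v \<le> i \<and> i \<le> e v} \<le> Suc p"
  proof
    fix i
    show "card {v\<in>V. s v \<le> i \<and> i \<le> e v} \<le> Suc p"
    proof (cases "i < length Bs")
      case True
      have BV: "Bs ! i \<subseteq> V" using cov True nth_mem by blast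
      have "{v\<in>V. s v \<le> i \<and> i \<le> e v} \<subseteq> Bs ! i" using memb True by auto
      then have "card {v\<in>V. s v \<le> i \<and> i \<le> e v} \<le> card (Bs ! i)"
        using BV finV finite_subset by (intro card_mono) auto
      also have "card (Bs ! i) \<le> Max (insert 0 (card ` set Bs))"
        using True by (intro Max_ge) auto
      also have "\<dots> \<le> Suc p" using w unfolding pd_width_def by linarith
      finally show ?thesis .
    next
      case False
      then have "{v\<in>V. s v \<le> i \<and> i \<le> e v} = {}" using elen by fastforce
      then show ?thesis by (metis card.empty le0)
    qed
  qed
  obtain col where col: "\<forall>u\<in>V. col u < Suc p" "proper V col" using greedy[OF bnd] by blast
  have edgeV: "u \<in> V \<and> v \<in> V" if ee: "{u, v} \<in> E" for u v
  proof -
    obtain x y where xy: "{u, v} = {x, y}" "x \<in> V" "y \<in> V" using edges[OF ee] by blast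
    have "u \<in> {x, y}" "v \<in> {x, y}" unfolding xy(1)[symmetric] by simp_all
    then show ?thesis using xy by blast
  qed
  have adjE: "adj u v" if ee: "{u, v} \<in> E" for u v
  proof -
    obtain B where B: "B \<in> set Bs" "{u, v} \<subseteq> B" using ecov ee by blast
    then obtain j where j: "j < length Bs" "Bs ! j = B" by (auto simp: in_set_conv_nth)
    have "u \<in> V" "v \<in> V" using edgeV[OF ee] by auto
    then have "s u \<le> j \<and> j \<le> e u" "s v \<le> j \<and> j \<le> e v" using memb j B by auto
    then show ?thesis unfolding adj_def by auto
  qed
  show ?thesis
  proof (cases "card V < alpha (Suc p)")
    case True
    have "card V \<le> p ^ 2" using True alpha_le[of p] by linarith
    moreover have "del_vertices_E E V = {}"
    proof -
      have "x \<inter> V \<noteq> {}" if "x \<in> E" for x using edges[OF that] by auto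
      then show ?thesis unfolding del_vertices_E_def by auto
    qed
    moreover have "equitable_coloring {} {} (p + 1) (\<lambda>_. 0)"
      unfolding equitable_coloring_def proper_coloring_def by auto
    ultimately show ?thesis unfolding almost_equitably_colorable_def equitably_colorable_def
      by (intro exI[of _ V]) auto
  next
    case False
    define q where "q = (card V - alpha (Suc p)) div Suc p"
    have q1: "Suc p * q \<le> card V - alpha (Suc p)" unfolding q_def
      by (rule times_div_less_eq_dividend)
    have q2: "card V - alpha (Suc p) < Suc p * Suc q" unfolding q_def
      using dividend_less_times_div[of "Suc p" "card V - alpha (Suc p)"] by simp
    have pre: "Suc p * q + alpha (Suc p) \<le> card V" using q1 False by linarith
    obtain X c where X: "X \<subseteq> V" "card X \<le> max (alpha (Suc p)) (card V - Suc p * Suc q)"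
      "\<forall>u\<in>V-X. c u < Suc p" "proper (V-X) c"
      "\<forall>i<Suc p. card {u\<in>V-X. c u = i} = q \<or> card {u\<in>V-X. c u = i} = Suc q"
      using main[OF _ col(1) col(2) pre] by blast
    have cX: "card X \<le> p ^ 2" using X(2) q2 alpha_le[of p] by linarith
    have pc: "proper_coloring (V - X) (del_vertices_E E X) (p + 1) c"
      unfolding proper_coloring_def
    proof (intro conjI allI impI ballI)
      fix v assume "v \<in> V - X" then show "c v < p + 1" using X(3) by auto
    next
      fix u v assume uv: "{u, v} \<in> del_vertices_E E X" "u \<noteq> v"
      then have E: "{u, v} \<in> E" "{u, v} \<inter> X = {}" unfolding del_vertices_E_def by auto
      then have "u \<in> V - X" "v \<in> V - X" using edgeV[OF E(1)] by auto
      then show "c u \<noteq> c v" using properD[OF X(4)] adjE[OF E(1)] uv(2) by auto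
    qed
    have "equitable_coloring (V - X) (del_vertices_E E X) (p + 1) c"
      unfolding equitable_coloring_def
    proof (intro conjI pc allI impI)
      fix i j assume "i < p + 1" "j < p + 1"
      then show "card {v \<in> V - X. c v = i} \<le> card {v \<in> V - X. c v = j} + 1"
        using X(5)[rule_format, of i] X(5)[rule_format, of j] by auto
    qed
    then show ?thesis unfolding almost_equitably_colorable_def equitably_colorable_def
      using X(1) cX by blast
  qed
qed

end
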